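(* Let $E^2$ denote the Stokes operator in cardioid coordinates $(\mu,\nu,\varphi)$, acting on functions $\psi(\mu,\nu)$ with $\mu,\nu>0$, by $$E^2\psi=(\mu^2+\nu^2)^3\left[\frac{\partial^2\psi}{\partial \mu^2}+\frac{3\mu^2-\nu^2}{\mu(\mu^2+\nu^2)}\frac{\partial\psi}{\partial \mu}+\frac{3\nu^2-\mu^2}{\nu(\mu^2+\nu^2)}\frac{\partial\psi}{\partial \nu}+\frac{\partial^2\psi}{\partial \nu^2}\right].$$ Then the equation $E^2\psi=0$ $R$-separates variables with $R(\mu,\nu)=\sqrt{2}(\mu^2+\nu^2)$: for twice differentiable, nowhere vanishing $M$ and $N$, the function $\psi(\mu,\nu)=\frac{1}{\sqrt2(\mu^2+\nu^2)}M(\mu)N(\nu)$ satisfies $E^2\psi=0$ if and only if there is a constant $\lambda$ with $$\frac{M''}{M}-\frac{1}{\mu}\frac{M'}{M}=\lambda=-\frac{N''}{N}+\frac{1}{\nu}\frac{N'}{N}.$$ Moreover, for $\lambda=n^2>0$ the solutions are exactly $$M(\mu)=c_1\mu I_1(n\mu)+c_2\mu K_1(n\mu),\qquad N(\nu)=c_3\nu J_1(n\nu)+c_4\nu Y_1(n\nu),$$ with arbitrary constants $c_1,\dots,c_4$; in particular every function $\psi(\mu,\nu)=\frac{1}{\mu^2+\nu^2}\big[c_1\mu I_1(n\mu)+c_2\mu K_1(n\mu)\big]\big[c_3\nu J_1(n\nu)+c_4\nu Y_1(n\nu)\big]$ with $n>0$ satisfies $E^2\psi=0$.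
   Context: Cardioid coordinates $(\mu,\nu,\varphi)$, $\mu,\nu\ge0$, $\varphi\in[0,2\pi)$, are given by $x=\frac{\mu\nu\cos\varphi}{(\mu^2+\nu^2)^2}$, $y=\frac{\mu\nu\sin\varphi}{(\mu^2+\nu^2)^2}$, $z=\frac{\mu^2-\nu^2}{2(\mu^2+\nu^2)^2}$. For a rotational coordinate system $x=\rho(q_1,q_2)\cos\varphi$, $y=\rho(q_1,q_2)\sin\varphi$, $z=z(q_1,q_2)$, with $h_i=\big((\partial_{q_i}\rho)^2+(\partial_{q_i}z)^2\big)^{-1/2}$ and $\varpi=|\rho|$, the Stokes operator is $E^2=h_1h_2\varpi\big[\partial_{q_1}\big(\tfrac{h_1}{h_2\varpi}\partial_{q_1}\big)+\partial_{q_2}\big(\tfrac{h_2}{h_1\varpi}\partial_{q_2}\big)\big]$; in cardioid coordinates this is the displayed formula. $J_1,Y_1$ are the Bessel functions of order one of the first and second kind, and $I_1,K_1$ the modified Bessel functions of order one of the first and second kind. *)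

theory Defs
  imports "HOL-Analysis.Analysis"
begin

text \<open>Bessel functions of order one (real argument, intended for x > 0), via their
standard power series (DLMF 10.2.2, 10.8.1, 10.25.2, 10.31.1 with n = 1).\<close>

definition besselJ1 :: "real \<Rightarrow> real" where
  "besselJ1 x = (\<Sum>k. (-1)^k / (fact k * fact (k+1)) * (x/2)^(2*k+1))"

definition besselI1 :: "real \<Rightarrow> real" where
  "besselI1 x = (\<Sum>k. 1 / (fact k * fact (k+1)) * (x/2)^(2*k+1))"

definition besselY1 :: "real \<Rightarrow> real" where
  "besselY1 x = - 2 / (pi * x) + (2/pi) * ln (x/2) * besselJ1 x
     - (x / (2*pi)) * (\<Sum>k. (Digamma (real k + 1) + Digamma (real k + 2))
                              * (-(x^2)/4)^k / (fact k * fact (k+1)))"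

definition besselK1 :: "real \<Rightarrow> real" where
  "besselK1 x = 1 / x + ln (x/2) * besselI1 x
     - (x / 4) * (\<Sum>k. (Digamma (real k + 1) + Digamma (real k + 2))
                         * (x^2/4)^k / (fact k * fact (k+1)))"

definition stokesE2_cardioid :: "(real \<Rightarrow> real \<Rightarrow> real) \<Rightarrow> real \<Rightarrow> real \<Rightarrow> real" where
  "stokesE2_cardioid \<psi> \<mu> \<nu> =
     (\<mu>^2 + \<nu>^2)^3 *
       ( deriv (\<lambda>m. deriv (\<lambda>m'. \<psi> m' \<nu>) m) \<mu>
       + (3*\<mu>^2 - \<nu>^2) / (\<mu> * (\<mu>^2 + \<nu>^2)) * deriv (\<lambda>m. \<psi> m \<nu>) \<mu>
       + (3*\<nu>^2 - \<mu>^2) / (\<nu> * (\<mu>^2 + \<nu>^2)) * deriv (\<lambda>v. \<psi> \<mu> v) \<nu>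
       + deriv (\<lambda>v. deriv (\<lambda>v'. \<psi> \<mu> v') v) \<nu>)"

definition twice_diff_pos :: "(real \<Rightarrow> real) \<Rightarrow> bool" where
  "twice_diff_pos f \<longleftrightarrow> (\<forall>x>0. f differentiable at x \<and> deriv f differentiable at x)"

end

theory Submission
  imports Defs
begin

definition PS :: "(nat \<Rightarrow> real) \<Rightarrow> real \<Rightarrow> real" where
  "PS c s = (\<Sum>k. c k * s^k)"

definition gco :: "nat \<Rightarrow> real" where
  "gco k = 1 / (fact k * fact (k+1))"

definition hco :: "nat \<Rightarrow> real" where
  "hco k = (Digamma (real k + 1) + Digamma (real k + 2)) / (fact k * fact (k+1))"

lemma harm_le_n: "harm n \<le> (real n)"
proof (induction n)
  case 0 then show ?case by (simp add: harm_def)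
next
  case (Suc n)
  have "inverse (real (Suc n)) \<le> 1" by (simp add: inverse_le_1_iff)
  then show ?case using Suc by (simp add: harm_Suc)
qed

lemma Digamma_nat_bound: "\<bar>Digamma (real n + 1)\<bar> \<le> real n + 1"
proof -
  have "Digamma (real n + 1) = harm n - euler_mascheroni"
    using Digamma_of_nat[of n, where 'a=real] by (simp add: add.commute)
  moreover have "harm n \<ge> (0::real)" by (rule harm_nonneg)
  moreover have "harm n \<le> real n" by (rule harm_le_n)
  moreover have "(euler_mascheroni::real) > 0" by (rule euler_mascheroni_pos)
  moreover have "(euler_mascheroni::real) < 1" using euler_mascheroni_less_13_over_22 by simp
  ultimately show ?thesis by linarith
qed

lemma summable_gco: "summable (\<lambda>k. gco k * s^k)"
proof (rule summable_comparison_test[OF _ summable_exp[of "\<bar>s\<bar>"]])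
  show "\<exists>N. \<forall>n\<ge>N. norm (gco n * s ^ n) \<le> inverse (fact n) * \<bar>s\<bar> ^ n"
  proof (intro exI[of _ 0] allI impI)
    fix n :: nat
    have f1: "fact (n+1) \<ge> (1::real)" by (rule fact_ge_1)
    have "norm (gco n * s ^ n) = \<bar>s\<bar>^n / (fact n * fact (n+1))"
      by (simp add: gco_def abs_mult power_abs)
    also have "\<dots> \<le> \<bar>s\<bar>^n / fact n"
      by (rule divide_left_mono) (use f1 in \<open>auto intro: mult_pos_pos\<close>)
    finally show "norm (gco n * s ^ n) \<le> inverse (fact n) * \<bar>s\<bar> ^ n" by (simp add: field_simps)
  qed
qed

lemma summable_hco: "summable (\<lambda>k. hco k * s^k)"
proof (rule summable_comparison_test[OF _ summable_mult[OF summable_exp[of "\<bar>s\<bar>"], of 3]])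
  show "\<exists>N. \<forall>n\<ge>N. norm (hco n * s ^ n) \<le> 3 * (inverse (fact n) * \<bar>s\<bar> ^ n)"
  proof (intro exI[of _ 0] allI impI)
    fix n :: nat
    have b1: "\<bar>Digamma (real n + 1)\<bar> \<le> real n + 1" by (rule Digamma_nat_bound)
    have b2: "\<bar>Digamma (real n + 2)\<bar> \<le> real n + 2"
      using Digamma_nat_bound[of "Suc n"] by (simp add: add.commute)
    have n0: "real n \<ge> 0" by simp
    have num: "\<bar>Digamma (real n + 1) + Digamma (real n + 2)\<bar> \<le> 3 * (real n + 1)"
      using b1 b2 abs_triangle_ineq[of "Digamma (real n + 1)" "Digamma (real n + 2)"] using n0 by argo
    have ff: "fact (n+1) = (real n + 1) * fact n" by simp
    have fpos: "(fact n :: real) > 0" by simp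
    have "norm (hco n * s ^ n) = \<bar>Digamma (real n + 1) + Digamma (real n + 2)\<bar> * \<bar>s\<bar>^n / (fact n * fact (n+1))"
      by (simp add: hco_def abs_mult power_abs)
    also have "\<dots> \<le> 3 * (real n + 1) * \<bar>s\<bar>^n / (fact n * fact (n+1))"
      by (intro divide_right_mono mult_right_mono num) auto
    also have "\<dots> = 3 * \<bar>s\<bar>^n / (fact n * fact n)"
      proof -
      have "real n + 1 \<noteq> 0" using n0 by linarith
      then show ?thesis unfolding ff using fpos by (simp add: divide_simps)
    qed
    also have "\<dots> \<le> 3 * \<bar>s\<bar>^n / fact n"
      by (rule divide_left_mono) (use fpos in \<open>auto simp: fact_ge_1\<close>)
    finally show "norm (hco n * s ^ n) \<le> 3 * (inverse (fact n) * \<bar>s\<bar> ^ n)" by (simp add: field_simps)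
  qed
qed

definition allsum :: "(nat \<Rightarrow> real) \<Rightarrow> bool" where
  "allsum c \<longleftrightarrow> (\<forall>s. summable (\<lambda>k. c k * s^k))"

lemma allsum_gco: "allsum gco" using summable_gco by (simp add: allsum_def)
lemma allsum_hco: "allsum hco" using summable_hco by (simp add: allsum_def)

lemma allsum_diffs: "allsum c \<Longrightarrow> allsum (diffs c)"
  unfolding allsum_def by (blast intro: termdiff_converges_all)

lemma PS_deriv: "allsum c \<Longrightarrow> (PS c has_real_derivative PS (diffs c) x) (at x)"
  unfolding allsum_def PS_def fun_eq_iff[symmetric]
  by (rule termdiffs_strong_converges_everywhere) blast

lemma PS_sums: "allsum c \<Longrightarrow> (\<lambda>k. c k * s^k) sums PS c s"
  unfolding allsum_def PS_def by blast

lemma PS_lin: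
  assumes "allsum a" "allsum b"
  shows "x * PS a s + y * PS b s = PS (\<lambda>k. x * a k + y * b k) s"
proof -
  have "(\<lambda>k. x * (a k * s^k) + y * (b k * s^k)) sums (x * PS a s + y * PS b s)"
    by (intro sums_add sums_mult PS_sums assms)
  then show ?thesis unfolding PS_def by (simp add: sums_iff algebra_simps)
qed

lemma allsum_lin: "allsum a \<Longrightarrow> allsum b \<Longrightarrow> allsum (\<lambda>k. x * a k + y * b k)"
  unfolding allsum_def
proof
  fix s assume "\<forall>s. summable (\<lambda>k. a k * s ^ k)" "\<forall>s. summable (\<lambda>k. b k * s ^ k)"
  then have "summable (\<lambda>k. x * (a k * s^k) + y * (b k * s^k))"
    by (intro summable_add summable_mult) auto
  then show "summable (\<lambda>k. (x * a k + y * b k) * s ^ k)" by (simp add: algebra_simps)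
qed

lemma PS_head:
  assumes "allsum c"
  shows "PS c s = c 0 + s * PS (\<lambda>k. c (Suc k)) s"
proof (cases "s = 0")
  case True then show ?thesis by (simp add: PS_def)
next
  case False
  have "(\<lambda>k. c k * s^k) sums PS c s" by (rule PS_sums[OF assms])
  then have "(\<lambda>k. c (Suc k) * s^(Suc k)) sums (PS c s - c 0)"
    using sums_Suc_iff[of "\<lambda>k. c k * s^k" "PS c s - c 0"] by simp
  then have "(\<lambda>k. c (Suc k) * s^(Suc k) / s) sums ((PS c s - c 0) / s)"
    by (rule sums_divide)
  then have "(\<lambda>k. c (Suc k) * s^k) sums ((PS c s - c 0) / s)"
    using False by simp
  then have "PS (\<lambda>k. c (Suc k)) s = (PS c s - c 0) / s"
    unfolding PS_def by (simp add: sums_iff)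
  then show ?thesis using False by (simp add: field_simps)
qed

lemma PS_sdiffs:
  assumes "allsum c"
  shows "s * PS (diffs c) s = PS (\<lambda>k. of_nat k * c k) s"
proof -
  have "allsum (\<lambda>k. of_nat k * c k)"
  proof -
    have "allsum (diffs c)" using allsum_diffs[OF assms] .
    then have "allsum (\<lambda>k. s * diffs c k)" for s :: real
      using allsum_lin[of "diffs c" "diffs c" s 0] by simp
    show ?thesis unfolding allsum_def
    proof
      fix s :: real
      show "summable (\<lambda>k. real k * c k * s ^ k)"
      proof -
        have "summable (\<lambda>k. diffs c k * s^k)" using allsum_diffs[OF assms] by (simp add: allsum_def)
        then have "summable (\<lambda>k. s * (diffs c k * s^k))" by (rule summable_mult)
        then have "summable (\<lambda>k. real (Suc k) * c (Suc k) * s ^ (Suc k))"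
          by (simp add: diffs_def algebra_simps)
        then show ?thesis by (subst summable_Suc_iff[symmetric])
      qed
    qed
  qed
  from PS_head[OF this, of s] show ?thesis by (simp add: diffs_def)
qed

lemma PS_sdiffs2:
  assumes "allsum c"
  shows "s * PS (diffs (diffs c)) s = PS (\<lambda>k. of_nat k * of_nat (Suc k) * c (Suc k)) s"
  using PS_sdiffs[OF allsum_diffs[OF assms], of s] by (simp add: diffs_def mult.assoc)

lemma allsum_kc: "allsum c \<Longrightarrow> allsum (\<lambda>k. of_nat k * c k)"
proof -
  assume a: "allsum c"
  show ?thesis unfolding allsum_def
  proof
    fix s :: real
    have "summable (\<lambda>k. diffs c k * s^k)" using allsum_diffs[OF a] by (simp add: allsum_def)
    then have "summable (\<lambda>k. s * (diffs c k * s^k))" by (rule summable_mult)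
    then have "summable (\<lambda>k. real (Suc k) * c (Suc k) * s ^ (Suc k))"
      by (simp add: diffs_def algebra_simps)
    then show "summable (\<lambda>k. real k * c k * s ^ k)" by (subst summable_Suc_iff[symmetric])
  qed
qed

lemma gco_Suc: "gco (Suc k) = gco k / ((real k + 1) * (real k + 2))"
  by (simp add: gco_def field_simps)

lemma G_ode: "2 * PS (diffs gco) s + s * PS (diffs (diffs gco)) s = PS gco s"
proof -
  have "s * PS (diffs (diffs gco)) s = PS (\<lambda>k. of_nat k * diffs gco k) s"
    by (rule PS_sdiffs[OF allsum_diffs[OF allsum_gco]])
  moreover have "2 * PS (diffs gco) s + 1 * PS (\<lambda>k. of_nat k * diffs gco k) s
      = PS (\<lambda>k. 2 * diffs gco k + 1 * (of_nat k * diffs gco k)) s"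
    by (rule PS_lin allsum_diffs allsum_gco allsum_kc)+
  moreover have "(\<lambda>k. 2 * diffs gco k + 1 * (of_nat k * diffs gco k)) = gco"
  proof
    fix k
    have nz: "real k + 2 \<noteq> 0" "real k + 1 \<noteq> 0" by (simp_all add: add_nonneg_pos)
    have rs: "real (Suc k) = real k + 1" by simp
    have "diffs gco k = gco k / (real k + 2)"
      unfolding diffs_def rs gco_Suc using nz by simp
    then show "2 * diffs gco k + 1 * (of_nat k * diffs gco k) = gco k"
      using nz by (simp add: field_simps)
  qed
  ultimately show ?thesis by simp
qed

lemma Digamma_step: "Digamma (real k + 2) = Digamma (real k + 1) + 1 / (real k + 1)"
  using Digamma_plus1[of "real k + 1"] by (simp add: add.assoc add_nonneg_pos)

lemma hco_Suc: "hco (Suc k) = (Digamma (real k + 2) + Digamma (real k + 3)) / ((real k + 1) * (real k + 2) * (fact k * fact (k+1)))"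
proof -
  have a: "Digamma (real (Suc k) + 1) = Digamma (real k + 2)" by (simp add: add.commute)
  have b: "Digamma (real (Suc k) + 2) = Digamma (real k + 3)" by (simp add: add.commute)
  show ?thesis unfolding hco_def a b by (simp add: algebra_simps)
qed

lemma hco_coeff: "2 * diffs hco k + of_nat k * diffs hco k - hco k = (2 * real k + 3) * gco (Suc k)"
proof -
  define f :: real where "f = fact k * fact (k+1)"
  define D1 where "D1 = Digamma (real k + 1)"
  define D2 where "D2 = Digamma (real k + 2)"
  define D3 where "D3 = Digamma (real k + 3)"
  have d2: "D2 = D1 + 1 / (real k + 1)" unfolding D1_def D2_def by (rule Digamma_step)
  have d3: "D3 = D2 + 1 / (real k + 2)" unfolding D3_def D2_def
    using Digamma_step[of "Suc k"] by (simp add: add.commute add.left_commute)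
  have nz: "real k + 1 \<noteq> 0" "real k + 2 \<noteq> 0" by (simp_all add: add_nonneg_pos)
  have fz: "f \<noteq> 0" unfolding f_def by simp
  have h0: "hco k = (D1 + D2) / f" unfolding hco_def D1_def D2_def f_def by simp
  have h1: "diffs hco k = (D2 + D3) / ((real k + 2) * f)"
  proof -
    have rs: "real (Suc k) = real k + 1" by simp
    show ?thesis unfolding diffs_def rs hco_Suc D2_def D3_def f_def using nz by (simp add: mult.assoc)
  qed
  have g1: "gco (Suc k) = 1 / ((real k + 1) * (real k + 2) * f)"
    unfolding gco_Suc gco_def f_def by (simp add: algebra_simps)
  have "2 * diffs hco k + of_nat k * diffs hco k - hco k = (D3 - D1) / f"
  proof -
    have "2 * diffs hco k + of_nat k * diffs hco k = (real k + 2) * diffs hco k" by (simp add: algebra_simps)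
    also have "\<dots> = (D2 + D3) / f" unfolding h1 using nz by simp
    finally show ?thesis unfolding h0 by (simp add: diff_divide_distrib[symmetric])
  qed
  also have "\<dots> = (1 / (real k + 1) + 1 / (real k + 2)) / f" using d2 d3 by simp
  also have "\<dots> = (2 * real k + 3) * gco (Suc k)"
    unfolding g1 using nz fz by (simp add: field_simps)
  finally show ?thesis .
qed

lemma H_ode: "PS gco s + 2 * (s * PS (diffs gco) s)
   = 1 + s * (2 * PS (diffs hco) s + s * PS (diffs (diffs hco)) s - PS hco s)"
proof -
  have "s * PS (diffs gco) s = PS (\<lambda>k. of_nat k * gco k) s"
    by (rule PS_sdiffs[OF allsum_gco])
  then have L1: "PS gco s + 2 * (s * PS (diffs gco) s) = PS (\<lambda>k. 1 * gco k + 2 * (of_nat k * gco k)) s"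
    using PS_lin[OF allsum_gco allsum_kc[OF allsum_gco], of 1 s 2] by simp
  have L2: "\<dots> = 1 + s * PS (\<lambda>k. (2 * real k + 3) * gco (Suc k)) s"
  proof -
    have al: "allsum (\<lambda>k. 1 * gco k + 2 * (of_nat k * gco k))"
      by (intro allsum_lin allsum_kc allsum_gco)
    have e: "(\<lambda>k. 1 * gco (Suc k) + 2 * (of_nat (Suc k) * gco (Suc k))) = (\<lambda>k. (2 * real k + 3) * gco (Suc k))"
      by (simp add: algebra_simps)
    show ?thesis using PS_head[OF al, of s] unfolding e by (simp add: gco_def)
  qed
  have "s * PS (diffs (diffs hco)) s = PS (\<lambda>k. of_nat k * diffs hco k) s"
    by (rule PS_sdiffs[OF allsum_diffs[OF allsum_hco]])
  then have "2 * PS (diffs hco) s + s * PS (diffs (diffs hco)) s - PS hco s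
     = 1 * (2 * PS (diffs hco) s + 1 * PS (\<lambda>k. of_nat k * diffs hco k) s) + (-1) * PS hco s"
    by simp
  also have "\<dots> = PS (\<lambda>k. 1 * (2 * diffs hco k + 1 * (of_nat k * diffs hco k)) + (-1) * hco k) s"
  proof -
    have a1: "allsum (diffs hco)" "allsum (\<lambda>k. of_nat k * diffs hco k)" "allsum hco"
      by (intro allsum_diffs allsum_hco allsum_kc)+
    have a2: "allsum (\<lambda>k. 2 * diffs hco k + 1 * (of_nat k * diffs hco k))"
      by (intro allsum_lin a1)
    show ?thesis using PS_lin[OF a1(1,2), of 2 s 1] PS_lin[OF a2 a1(3), of 1 s "-1"] by simp
  qed
  also have "\<dots> = PS (\<lambda>k. (2 * real k + 3) * gco (Suc k)) s"
    using hco_coeff by simp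
  finally show ?thesis using L1 L2 by simp
qed

lemma PS_chain [derivative_intros]:
  assumes "allsum c" "(f has_real_derivative f') (at x)"
  shows "((\<lambda>x. PS c (f x)) has_real_derivative PS (diffs c) (f x) * f') (at x)"
  using DERIV_chain2[OF PS_deriv[OF assms(1)] assms(2)] .

lemma PS_isCont: "allsum c \<Longrightarrow> isCont (PS c) x"
  using PS_deriv DERIV_isCont by blast

lemma lnabs_deriv:
  assumes "(x::real) \<noteq> 0"
  shows "((\<lambda>s. ln \<bar>s\<bar>) has_real_derivative 1 / x) (at x)"
proof (cases "x > 0")
  case True
  have "(ln has_real_derivative 1 / x) (at x)" using DERIV_ln_divide[OF True] .
  then show ?thesis
    by (rule has_field_derivative_transform_within_open[where S="{0<..}"]) (use True in auto)
next
  case False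
  then have xn: "x < 0" using assms by simp
  have "((\<lambda>s. ln (- s)) has_real_derivative (1 / (-x)) * (-1)) (at x)"
    by (rule DERIV_chain2[where f=ln, OF DERIV_ln_divide]) (use xn in \<open>auto intro!: derivative_eq_intros\<close>)
  then have "((\<lambda>s. ln (- s)) has_real_derivative 1 / x) (at x)" by simp
  then show ?thesis
    by (rule has_field_derivative_transform_within_open[where S="{..<0}"]) (use xn in auto)
qed

lemma lnabs_chain [derivative_intros]:
  assumes "f x \<noteq> 0" "(f has_real_derivative f') (at x)"
  shows "((\<lambda>x. ln \<bar>f x\<bar>) has_real_derivative 1 / f x * f') (at x)"
  using DERIV_chain2[OF lnabs_deriv[OF assms(1)] assms(2)] .

definition "Gf = PS gco"
definition "G1f = PS (diffs gco)"
definition "G2f = PS (diffs (diffs gco))"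
definition "Hf = PS hco"
definition "H1f = PS (diffs hco)"
definition "H2f = PS (diffs (diffs hco))"

definition "Phi s = s * Gf s"
definition "Phi1 s = Gf s + s * G1f s"
definition "Phi2 s = 2 * G1f s + s * G2f s"

definition "Psi s = 1 + ln \<bar>s\<bar> * (s * Gf s) - s * Hf s"
definition "Psi1 s = Gf s + ln \<bar>s\<bar> * (Gf s + s * G1f s) - (Hf s + s * H1f s)"
definition "Psi2 s = G1f s + (Gf s + s * G1f s) / s + ln \<bar>s\<bar> * (2 * G1f s + s * G2f s) - (2 * H1f s + s * H2f s)"

lemma Phi_d1: "(Phi has_real_derivative Phi1 x) (at x)"
  unfolding Phi_def[abs_def] Phi1_def Gf_def G1f_def
  by (auto intro!: derivative_eq_intros allsum_gco)

lemma Phi_d2: "(Phi1 has_real_derivative Phi2 x) (at x)"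
  unfolding Phi1_def[abs_def] Phi2_def G1f_def Gf_def G2f_def
  by (auto intro!: derivative_eq_intros allsum_gco allsum_diffs)

lemma Phi_ode: "s * Phi2 s = Phi s"
  using G_ode[of s] unfolding Phi2_def Phi_def G1f_def G2f_def Gf_def by simp

lemma Psi_d1:
  assumes "x \<noteq> 0" shows "(Psi has_real_derivative Psi1 x) (at x)"
  unfolding Psi_def[abs_def] Psi1_def Gf_def G1f_def Hf_def H1f_def
  using assms by (auto intro!: derivative_eq_intros allsum_gco allsum_hco simp: algebra_simps)

lemma Psi_d2:
  assumes "x \<noteq> 0" shows "(Psi1 has_real_derivative Psi2 x) (at x)"
  unfolding Psi1_def[abs_def] Psi2_def Gf_def G1f_def G2f_def Hf_def H1f_def H2f_def
  using assms by (auto intro!: derivative_eq_intros allsum_gco allsum_hco allsum_diffs simp: algebra_simps add_divide_distrib)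

lemma Psi_ode:
  assumes "s \<noteq> 0" shows "s * Psi2 s = Psi s"
proof -
  have g: "2 * G1f s + s * G2f s = Gf s" using G_ode[of s] unfolding G1f_def G2f_def Gf_def by simp
  have h: "Gf s + 2 * (s * G1f s) = 1 + s * (2 * H1f s + s * H2f s - Hf s)"
    using H_ode[of s] unfolding G1f_def G2f_def Gf_def H1f_def H2f_def Hf_def by simp
  have "s * Psi2 s = Gf s + 2 * (s * G1f s) + ln \<bar>s\<bar> * (s * (2 * G1f s + s * G2f s)) - s * (2 * H1f s + s * H2f s)"
    unfolding Psi2_def using assms by (simp add: field_simps)
  also have "\<dots> = Psi s" unfolding g h Psi_def by (simp add: algebra_simps)
  finally show ?thesis .
qed

definition "Wp s = s * (Gf s)^2 - Gf s - s * G1f s + s^2 * (G1f s * Hf s - Gf s * H1f s)"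

lemma Wp_eq: "Wp = (\<lambda>s. Phi s * Psi1 s - Phi1 s * Psi s)"
  unfolding Wp_def Phi_def Psi1_def Phi1_def Psi_def by (rule ext) (simp add: algebra_simps power2_eq_square)

lemma Wp_deriv0:
  assumes "x \<noteq> 0" shows "(Wp has_real_derivative 0) (at x)"
proof -
  have "((\<lambda>s. Phi s * Psi1 s - Phi1 s * Psi s) has_real_derivative
     (Phi1 x * Psi1 x + Phi x * Psi2 x) - (Phi2 x * Psi x + Phi1 x * Psi1 x)) (at x)"
    using DERIV_diff[OF DERIV_mult[OF Phi_d1 Psi_d2[OF assms]] DERIV_mult[OF Phi_d2 Psi_d1[OF assms]]] by (simp add: mult.commute)
  moreover have "(Phi1 x * Psi1 x + Phi x * Psi2 x) - (Phi2 x * Psi x + Phi1 x * Psi1 x) = 0"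
  proof -
    have "Phi x * Psi2 x = x * Phi2 x * Psi2 x" using Phi_ode[of x] by simp
    also have "\<dots> = Phi2 x * Psi x" using Psi_ode[OF assms] by (simp add: algebra_simps)
    finally show ?thesis by simp
  qed
  ultimately show ?thesis unfolding Wp_eq by simp
qed

lemma Wp_isCont: "isCont Wp x"
  unfolding Wp_def[abs_def] Gf_def G1f_def Hf_def H1f_def
  by (intro continuous_intros PS_isCont allsum_gco allsum_hco allsum_diffs)

lemma Wp_0: "Wp 0 = -1"
proof -
  have "PS gco 0 = gco 0" unfolding PS_def by (rule powser_zero)
  then show ?thesis unfolding Wp_def Gf_def by (simp add: gco_def)
qed

lemma Wp_const: "Wp s = -1"
proof -
  have cont: "continuous_on A Wp" for A
    using Wp_isCont by (simp add: continuous_at_imp_continuous_on)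
  consider "s = 0" | "s > 0" | "s < 0" by linarith
  then show ?thesis
  proof cases
    case 1 then show ?thesis using Wp_0 by simp
  next
    case 2
    have "Wp s = Wp 0" by (rule DERIV_isconst_end[OF 2 cont]) (auto intro: Wp_deriv0)
    then show ?thesis using Wp_0 by simp
  next
    case 3
    have "Wp 0 = Wp s" by (rule DERIV_isconst_end[OF 3 cont]) (auto intro: Wp_deriv0)
    then show ?thesis using Wp_0 by simp
  qed
qed

lemma scaled:
  fixes f f1 f2 :: "real \<Rightarrow> real"
  assumes d1: "\<And>s. s \<noteq> 0 \<Longrightarrow> (f has_real_derivative f1 s) (at s)"
    and d2: "\<And>s. s \<noteq> 0 \<Longrightarrow> (f1 has_real_derivative f2 s) (at s)"
    and ode: "\<And>s. s \<noteq> 0 \<Longrightarrow> s * f2 s = f s"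
    and c: "c \<noteq> 0" and x: "x > 0"
  shows "((\<lambda>x. \<alpha> * f (c*x^2)) has_real_derivative \<alpha> * (f1 (c*x^2) * (2*c*x))) (at x)"
    and "((\<lambda>x. \<alpha> * (f1 (c*x^2) * (2*c*x))) has_real_derivative
           \<alpha> * (f2 (c*x^2) * (2*c*x) * (2*c*x) + f1 (c*x^2) * (2*c))) (at x)"
    and "\<alpha> * (f2 (c*x^2) * (2*c*x) * (2*c*x) + f1 (c*x^2) * (2*c))
           = \<alpha> * (f1 (c*x^2) * (2*c*x)) / x + 4*c*(\<alpha> * f (c*x^2))"
proof -
  have nz: "c * x^2 \<noteq> 0" using c x by simp
  have i: "((\<lambda>x. c*x^2) has_real_derivative 2*c*x) (at x)"
    by (auto intro!: derivative_eq_intros)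
  show "((\<lambda>x. \<alpha> * f (c*x^2)) has_real_derivative \<alpha> * (f1 (c*x^2) * (2*c*x))) (at x)"
    using DERIV_cmult[OF DERIV_chain2[OF d1[OF nz] i], of \<alpha>] .
  have i2: "((\<lambda>x. 2*c*x) has_real_derivative 2*c) (at x)"
    by (auto intro!: derivative_eq_intros)
  show "((\<lambda>x. \<alpha> * (f1 (c*x^2) * (2*c*x))) has_real_derivative
           \<alpha> * (f2 (c*x^2) * (2*c*x) * (2*c*x) + f1 (c*x^2) * (2*c))) (at x)"
    using DERIV_cmult[OF DERIV_mult[OF DERIV_chain2[OF d2[OF nz] i] i2], of \<alpha>] by (simp add: algebra_simps)
  have o: "c * x^2 * f2 (c*x^2) = f (c*x^2)" using ode[OF nz] .
  have "\<alpha> * (f2 (c*x^2) * (2*c*x) * (2*c*x) + f1 (c*x^2) * (2*c))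
      = \<alpha> * (4 * c * (c * x^2 * f2 (c*x^2)) + f1 (c*x^2) * (2*c))"
    by (simp add: algebra_simps power2_eq_square)
  also have "\<dots> = \<alpha> * (f1 (c*x^2) * (2*c*x)) / x + 4*c*(\<alpha> * f (c*x^2))"
    unfolding o using x by (simp add: field_simps)
  finally show "\<alpha> * (f2 (c*x^2) * (2*c*x) * (2*c*x) + f1 (c*x^2) * (2*c))
           = \<alpha> * (f1 (c*x^2) * (2*c*x)) / x + 4*c*(\<alpha> * f (c*x^2))" .
qed

lemma const_pos:
  fixes g :: "real \<Rightarrow> real"
  assumes d: "\<And>x. x > 0 \<Longrightarrow> (g has_real_derivative 0) (at x)" and x: "x > 0"
  shows "g x = g 1"
proof -
  have cont: "continuous_on {a..b} g" if "a > 0" for a b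
  proof (rule continuous_at_imp_continuous_on, intro ballI)
    fix z assume "z \<in> {a..b}"
    then have "z > 0" using that by simp
    then show "isCont g z" using d DERIV_isCont by blast
  qed
  consider "x = 1" | "x < 1" | "x > 1" by linarith
  then show ?thesis
  proof cases
    case 1 then show ?thesis by simp
  next
    case 2
    show ?thesis by (rule DERIV_isconst_end[OF 2 cont[OF x], symmetric]) (use x in \<open>auto intro: d\<close>)
  next
    case 3
    show ?thesis by (rule DERIV_isconst_end[OF 3 cont]) (auto intro: d)
  qed
qed

lemma wronsk_unique:
  fixes y y1 y2 u u1 u2 v v1 v2 :: "real \<Rightarrow> real" and q :: real
  assumes dy1: "\<And>x. x > 0 \<Longrightarrow> (y has_real_derivative y1 x) (at x)"
    and dy2: "\<And>x. x > 0 \<Longrightarrow> (y1 has_real_derivative y2 x) (at x)"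
    and ey: "\<And>x. x > 0 \<Longrightarrow> y2 x = y1 x / x + q * y x"
    and du1: "\<And>x. x > 0 \<Longrightarrow> (u has_real_derivative u1 x) (at x)"
    and du2: "\<And>x. x > 0 \<Longrightarrow> (u1 has_real_derivative u2 x) (at x)"
    and eu: "\<And>x. x > 0 \<Longrightarrow> u2 x = u1 x / x + q * u x"
    and dv1: "\<And>x. x > 0 \<Longrightarrow> (v has_real_derivative v1 x) (at x)"
    and dv2: "\<And>x. x > 0 \<Longrightarrow> (v1 has_real_derivative v2 x) (at x)"
    and ev: "\<And>x. x > 0 \<Longrightarrow> v2 x = v1 x / x + q * v x"
    and W: "\<And>x. x > 0 \<Longrightarrow> u x * v1 x - u1 x * v x \<noteq> 0"
  shows "\<exists>c1 c2. \<forall>x>0. y x = c1 * u x + c2 * v x"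
proof -
  define Wf where "Wf x = u x * v1 x - u1 x * v x" for x
  define A where "A x = y x * v1 x - y1 x * v x" for x
  define B where "B x = u x * y1 x - u1 x * y x" for x
  have dW: "(Wf has_real_derivative Wf x / x) (at x)" if "x > 0" for x
  proof -
    have "(Wf has_real_derivative (u1 x * v1 x + u x * v2 x) - (u2 x * v x + u1 x * v1 x)) (at x)"
      unfolding Wf_def[abs_def]
      using DERIV_diff[OF DERIV_mult[OF du1[OF that] dv2[OF that]] DERIV_mult[OF du2[OF that] dv1[OF that]]] by (simp add: algebra_simps)
    moreover have "(u1 x * v1 x + u x * v2 x) - (u2 x * v x + u1 x * v1 x) = Wf x / x"
      unfolding Wf_def ev[OF that] eu[OF that] using that by (simp add: field_simps)
    ultimately show ?thesis by simp
  qed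
  have dA: "(A has_real_derivative A x / x) (at x)" if "x > 0" for x
  proof -
    have "(A has_real_derivative (y1 x * v1 x + y x * v2 x) - (y2 x * v x + y1 x * v1 x)) (at x)"
      unfolding A_def[abs_def]
      using DERIV_diff[OF DERIV_mult[OF dy1[OF that] dv2[OF that]] DERIV_mult[OF dy2[OF that] dv1[OF that]]] by (simp add: algebra_simps)
    moreover have "(y1 x * v1 x + y x * v2 x) - (y2 x * v x + y1 x * v1 x) = A x / x"
      unfolding A_def ev[OF that] ey[OF that] using that by (simp add: field_simps)
    ultimately show ?thesis by simp
  qed
  have dB: "(B has_real_derivative B x / x) (at x)" if "x > 0" for x
  proof -
    have "(B has_real_derivative (u1 x * y1 x + u x * y2 x) - (u2 x * y x + u1 x * y1 x)) (at x)"
      unfolding B_def[abs_def]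
      using DERIV_diff[OF DERIV_mult[OF du1[OF that] dy2[OF that]] DERIV_mult[OF du2[OF that] dy1[OF that]]] by (simp add: algebra_simps)
    moreover have "(u1 x * y1 x + u x * y2 x) - (u2 x * y x + u1 x * y1 x) = B x / x"
      unfolding B_def eu[OF that] ey[OF that] using that by (simp add: field_simps)
    ultimately show ?thesis by simp
  qed
  have quot: "((\<lambda>x. F x / Wf x) has_real_derivative 0) (at x)"
    if "x > 0" and dF: "(F has_real_derivative F x / x) (at x)" for F x
  proof -
    have wz: "Wf x \<noteq> 0" using W[OF that(1)] by (simp add: Wf_def)
    have "((\<lambda>x. F x / Wf x) has_real_derivative (F x / x * Wf x - F x * (Wf x / x)) / (Wf x * Wf x)) (at x)"
      by (rule DERIV_divide[OF dF dW[OF that(1)] wz])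
    then show ?thesis by simp
  qed
  have cA: "A x / Wf x = A 1 / Wf 1" if "x > 0" for x
    using const_pos[of "\<lambda>x. A x / Wf x", OF quot[OF _ dA] that] by simp
  have cB: "B x / Wf x = B 1 / Wf 1" if "x > 0" for x
    using const_pos[of "\<lambda>x. B x / Wf x", OF quot[OF _ dB] that] by simp
  show ?thesis
  proof (intro exI allI impI)
    fix x :: real assume x: "x > 0"
    have wz: "Wf x \<noteq> 0" using W[OF x] by (simp add: Wf_def)
    have "y x * Wf x = A x * u x + B x * v x" unfolding Wf_def A_def B_def by (simp add: algebra_simps)
    then have "y x = A x / Wf x * u x + B x / Wf x * v x" using wz by (simp add: field_simps)
    then show "y x = A 1 / Wf 1 * u x + B 1 / Wf 1 * v x" using cA[OF x] cB[OF x] by simp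
  qed
qed

lemma partial_helper:
  fixes A A1 A2 F :: "real \<Rightarrow> real"
  assumes dA1: "\<And>x. x > 0 \<Longrightarrow> (A has_real_derivative A1 x) (at x)"
    and dA2: "\<And>x. x > 0 \<Longrightarrow> (A1 has_real_derivative A2 x) (at x)"
    and F: "\<And>x. F x = C * A x / (k * (x^2 + b^2))"
    and k: "k \<noteq> 0" and mu: "\<mu> > 0"
  shows "deriv (\<lambda>x. deriv F x) \<mu> + (3*\<mu>^2 - b^2) / (\<mu> * (\<mu>^2 + b^2)) * deriv F \<mu>
       = C / (k * (\<mu>^2 + b^2)) * (A2 \<mu> - A1 \<mu> / \<mu>)"
proof -
  define g where "g x = inverse (x^2 + b^2)" for x
  define g1 where "g1 x = - 2 * x * (g x)^2" for x
  define g2 where "g2 x = - 2 * (g x)^2 + 8 * x^2 * (g x)^3" for x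
  define P1 where "P1 x = C / k * (A1 x * g x + A x * g1 x)" for x
  define P2 where "P2 x = C / k * (A2 x * g x + 2 * A1 x * g1 x + A x * g2 x)" for x
  have Rpos: "x^2 + b^2 > 0" if "x > 0" for x using that by (simp add: add_pos_nonneg)
  have dg: "(g has_real_derivative g1 x) (at x)" if x: "x > 0" for x
  proof -
    have d0: "((\<lambda>x. x^2 + b^2) has_real_derivative 2 * x) (at x)"
      by (auto intro!: derivative_eq_intros)
    have "((\<lambda>x. inverse (x^2 + b^2)) has_real_derivative
           - (2 * x * inverse ((x^2 + b^2) ^ Suc (Suc 0)))) (at x)"
      using DERIV_inverse_fun[OF d0] Rpos[OF x] by (metis less_irrefl)
    then show ?thesis unfolding g_def[abs_def] g1_def by (simp add: power2_eq_square)
  qed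
  have dg1: "(g1 has_real_derivative g2 x) (at x)" if x: "x > 0" for x
  proof -
    have "((\<lambda>x. - 2 * x * (g x * g x)) has_real_derivative
        (- 2 * 1) * (g x * g x) + (- 2 * x) * (g1 x * g x + g x * g1 x)) (at x)"
      using DERIV_mult[OF DERIV_cmult[OF DERIV_ident, of "-2"] DERIV_mult[OF dg[OF x] dg[OF x]]]
      by (simp add: algebra_simps)
    then show ?thesis unfolding g1_def[abs_def] g2_def
      by (simp add: power2_eq_square power3_eq_cube algebra_simps g1_def)
  qed
  have Feq: "F = (\<lambda>x. C / k * (A x * g x))"
    using F k by (auto simp: g_def field_simps)
  have dF: "(F has_real_derivative P1 x) (at x)" if x: "x > 0" for x
    unfolding Feq P1_def using DERIV_cmult[OF DERIV_mult[OF dA1[OF x] dg[OF x]], of "C/k"]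
    by (simp add: algebra_simps)
  have dP1: "(P1 has_real_derivative P2 \<mu>) (at \<mu>)"
    unfolding P1_def[abs_def] P2_def
    using DERIV_cmult[OF DERIV_add[OF DERIV_mult[OF dA2[OF mu] dg[OF mu]] DERIV_mult[OF dA1[OF mu] dg1[OF mu]]], of "C/k"]
    by (simp add: algebra_simps)
  have "deriv F \<mu> = P1 \<mu>" using DERIV_imp_deriv[OF dF[OF mu]] .
  moreover have "deriv (\<lambda>x. deriv F x) \<mu> = deriv P1 \<mu>"
  proof (rule deriv_cong_ev)
    have "eventually (\<lambda>x. x \<in> {0<..}) (nhds \<mu>)"
      using mu by (intro eventually_nhds_in_open) auto
    then show "\<forall>\<^sub>F x in nhds \<mu>. deriv F x = P1 x"
      by eventually_elim (auto intro: DERIV_imp_deriv dF)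
  qed simp
  moreover have "deriv P1 \<mu> = P2 \<mu>" using DERIV_imp_deriv[OF dP1] .
  moreover have "P2 \<mu> + (3*\<mu>^2 - b^2) / (\<mu> * (\<mu>^2 + b^2)) * P1 \<mu>
       = C / (k * (\<mu>^2 + b^2)) * (A2 \<mu> - A1 \<mu> / \<mu>)"
  proof -
    define R where "R = \<mu>^2 + b^2"
    have R: "R \<noteq> 0" using Rpos[OF mu] unfolding R_def by linarith
    have b2: "b^2 = R - \<mu>^2" unfolding R_def by simp
    have gR: "g \<mu> = inverse R" unfolding g_def R_def ..
    show ?thesis unfolding P1_def P2_def g1_def g2_def gR b2 R_def[symmetric]
      using R k mu by (simp add: field_simps power2_eq_square power3_eq_cube)
  qed
  ultimately show ?thesis by simp
qed

lemma E2_sep: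
  fixes M M1 M2 N N1 N2 :: "real \<Rightarrow> real"
  assumes dM1: "\<And>x. x > 0 \<Longrightarrow> (M has_real_derivative M1 x) (at x)"
    and dM2: "\<And>x. x > 0 \<Longrightarrow> (M1 has_real_derivative M2 x) (at x)"
    and dN1: "\<And>x. x > 0 \<Longrightarrow> (N has_real_derivative N1 x) (at x)"
    and dN2: "\<And>x. x > 0 \<Longrightarrow> (N1 has_real_derivative N2 x) (at x)"
    and k: "k \<noteq> 0" and mu: "\<mu> > 0" and nu: "\<nu> > 0"
  shows "stokesE2_cardioid (\<lambda>m v. M m * N v / (k * (m^2 + v^2))) \<mu> \<nu>
      = (\<mu>^2 + \<nu>^2)^2 / k * (N \<nu> * (M2 \<mu> - M1 \<mu> / \<mu>) + M \<mu> * (N2 \<nu> - N1 \<nu> / \<nu>))"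
proof -
  have hm: "deriv (\<lambda>x. deriv (\<lambda>m'. M m' * N \<nu> / (k * (m'^2 + \<nu>^2))) x) \<mu>
      + (3*\<mu>^2 - \<nu>^2) / (\<mu> * (\<mu>^2 + \<nu>^2)) * deriv (\<lambda>m'. M m' * N \<nu> / (k * (m'^2 + \<nu>^2))) \<mu>
      = N \<nu> / (k * (\<mu>^2 + \<nu>^2)) * (M2 \<mu> - M1 \<mu> / \<mu>)"
    by (rule partial_helper[OF dM1 dM2 _ k mu]) (simp_all add: mult.commute)
  have hv: "deriv (\<lambda>x. deriv (\<lambda>v'. M \<mu> * N v' / (k * (\<mu>^2 + v'^2))) x) \<nu>
      + (3*\<nu>^2 - \<mu>^2) / (\<nu> * (\<nu>^2 + \<mu>^2)) * deriv (\<lambda>v'. M \<mu> * N v' / (k * (\<mu>^2 + v'^2))) \<nu>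
      = M \<mu> / (k * (\<nu>^2 + \<mu>^2)) * (N2 \<nu> - N1 \<nu> / \<nu>)"
    by (rule partial_helper[OF dN1 dN2 _ k nu]) (simp_all add: add.commute)
  have R: "\<mu>^2 + \<nu>^2 \<noteq> 0" using mu by (simp add: add_pos_nonneg)
  have hv': "deriv (\<lambda>x. deriv (\<lambda>v'. M \<mu> * N v' / (k * (\<mu>^2 + v'^2))) x) \<nu>
      + (3*\<nu>^2 - \<mu>^2) / (\<nu> * (\<mu>^2 + \<nu>^2)) * deriv (\<lambda>v'. M \<mu> * N v' / (k * (\<mu>^2 + v'^2))) \<nu>
      = M \<mu> / (k * (\<mu>^2 + \<nu>^2)) * (N2 \<nu> - N1 \<nu> / \<nu>)"
    using hv by (simp add: add.commute)
  define ddm where "ddm = deriv (\<lambda>x. deriv (\<lambda>m'. M m' * N \<nu> / (k * (m'^2 + \<nu>^2))) x) \<mu>"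
  define dm where "dm = deriv (\<lambda>m'. M m' * N \<nu> / (k * (m'^2 + \<nu>^2))) \<mu>"
  define ddv where "ddv = deriv (\<lambda>x. deriv (\<lambda>v'. M \<mu> * N v' / (k * (\<mu>^2 + v'^2))) x) \<nu>"
  define dv where "dv = deriv (\<lambda>v'. M \<mu> * N v' / (k * (\<mu>^2 + v'^2))) \<nu>"
  have st: "stokesE2_cardioid (\<lambda>m v. M m * N v / (k * (m^2 + v^2))) \<mu> \<nu>
     = (\<mu>^2 + \<nu>^2)^3 * (ddm + (3*\<mu>^2 - \<nu>^2) / (\<mu> * (\<mu>^2 + \<nu>^2)) * dm
        + (3*\<nu>^2 - \<mu>^2) / (\<nu> * (\<mu>^2 + \<nu>^2)) * dv + ddv)"
    unfolding stokesE2_cardioid_def ddm_def dm_def ddv_def dv_def by simp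
  have e1: "ddm + (3*\<mu>^2 - \<nu>^2) / (\<mu> * (\<mu>^2 + \<nu>^2)) * dm = N \<nu> / (k * (\<mu>^2 + \<nu>^2)) * (M2 \<mu> - M1 \<mu> / \<mu>)"
    using hm unfolding ddm_def dm_def .
  have e2: "ddv + (3*\<nu>^2 - \<mu>^2) / (\<nu> * (\<mu>^2 + \<nu>^2)) * dv = M \<mu> / (k * (\<mu>^2 + \<nu>^2)) * (N2 \<nu> - N1 \<nu> / \<nu>)"
    using hv' unfolding ddv_def dv_def .
  have "ddm + (3*\<mu>^2 - \<nu>^2) / (\<mu> * (\<mu>^2 + \<nu>^2)) * dm
        + (3*\<nu>^2 - \<mu>^2) / (\<nu> * (\<mu>^2 + \<nu>^2)) * dv + ddv
      = N \<nu> / (k * (\<mu>^2 + \<nu>^2)) * (M2 \<mu> - M1 \<mu> / \<mu>) + M \<mu> / (k * (\<mu>^2 + \<nu>^2)) * (N2 \<nu> - N1 \<nu> / \<nu>)"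
    using e1 e2 by linarith
  then have st2: "stokesE2_cardioid (\<lambda>m v. M m * N v / (k * (m^2 + v^2))) \<mu> \<nu>
     = (\<mu>^2 + \<nu>^2)^3 * (N \<nu> / (k * (\<mu>^2 + \<nu>^2)) * (M2 \<mu> - M1 \<mu> / \<mu>) + M \<mu> / (k * (\<mu>^2 + \<nu>^2)) * (N2 \<nu> - N1 \<nu> / \<nu>))"
    unfolding st by simp
  have alg: "R'^3 * (a / (k * R') * X + b / (k * R') * Y) = R'^2 / k * (a * X + b * Y)"
    if "R' \<noteq> 0" for R' a b X Y :: real
    using that k by (simp add: field_simps power2_eq_square power3_eq_cube)
  show ?thesis unfolding st2 by (rule alg[OF R])
qed

lemma besselI1_eq: "besselI1 x = (x/2) * Gf ((x/2)^2)"
proof -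
  have "besselI1 x = (\<Sum>k. (x/2) * (gco k * ((x/2)^2)^k))"
    unfolding besselI1_def
    by (rule arg_cong[where f=suminf], rule ext) (simp add: gco_def power_mult[symmetric] power_Suc)
  also have "\<dots> = (x/2) * Gf ((x/2)^2)"
    unfolding Gf_def PS_def by (rule suminf_mult[OF summable_gco])
  finally show ?thesis .
qed

lemma besselJ1_eq: "besselJ1 x = (x/2) * Gf (-((x/2)^2))"
proof -
  have "besselJ1 x = (\<Sum>k. (x/2) * (gco k * (-((x/2)^2))^k))"
    unfolding besselJ1_def
    by (rule arg_cong[where f=suminf], rule ext) (simp add: gco_def power_minus[of "(x/2)^2"] power_mult[symmetric] power_Suc mult_ac)
  also have "\<dots> = (x/2) * Gf (-((x/2)^2))"
    unfolding Gf_def PS_def by (rule suminf_mult[OF summable_gco])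
  finally show ?thesis .
qed

lemma besselK1_eq: "besselK1 x = 1 / x + ln (x/2) * besselI1 x - (x/4) * Hf (x^2/4)"
proof -
  have "(\<Sum>k. (Digamma (real k + 1) + Digamma (real k + 2)) * (x^2/4)^k / (fact k * fact (k+1))) = Hf (x^2/4)"
    unfolding Hf_def PS_def by (rule arg_cong[where f=suminf], rule ext) (simp add: hco_def)
  then show ?thesis unfolding besselK1_def by simp
qed

lemma besselY1_eq: "besselY1 x = - 2 / (pi * x) + (2/pi) * ln (x/2) * besselJ1 x - (x / (2*pi)) * Hf (-(x^2)/4)"
proof -
  have "(\<Sum>k. (Digamma (real k + 1) + Digamma (real k + 2)) * (-(x^2)/4)^k / (fact k * fact (k+1))) = Hf (-(x^2)/4)"
    unfolding Hf_def PS_def by (rule arg_cong[where f=suminf], rule ext) (simp add: hco_def)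
  then show ?thesis unfolding besselY1_def by simp
qed

lemma uI_eq:
  assumes n: "n > 0"
  shows "x * besselI1 (n*x) = (2/n) * Phi (n^2/4 * x^2)"
proof -
  have s: "(n*x/2)^2 = n^2/4 * x^2" by (simp add: power_mult_distrib power_divide)
  show ?thesis unfolding besselI1_eq Phi_def s using n by (simp add: field_simps power2_eq_square)
qed

lemma uJ_eq:
  assumes n: "n > 0"
  shows "x * besselJ1 (n*x) = (-2/n) * Phi (-(n^2/4) * x^2)"
proof -
  have s: "-((n*x/2)^2) = -(n^2/4) * x^2" by (simp add: power_mult_distrib power_divide)
  show ?thesis unfolding besselJ1_eq Phi_def s using n by (simp add: field_simps power2_eq_square)
qed

lemma uK_eq:
  assumes n: "n > 0" and x: "x > 0"
  shows "x * besselK1 (n*x) = (1/n) * Psi (n^2/4 * x^2)"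
proof -
  have s: "(n*x/2)^2 = n^2/4 * x^2" by (simp add: power_mult_distrib power_divide)
  have s2: "(n*x)^2/4 = n^2/4 * x^2" by (simp add: power_mult_distrib)
  have l: "ln \<bar>n^2/4 * x^2\<bar> = 2 * ln (n*x/2)"
  proof -
    have "\<bar>n^2/4 * x^2\<bar> = (n*x/2)^2" using s by simp
    then show ?thesis by (simp add: ln_realpow)
  qed
  show ?thesis unfolding besselK1_eq besselI1_eq Psi_def s s2 l Gf_def Hf_def using n x
    by (simp add: field_simps power2_eq_square)
qed

lemma uY_eq:
  assumes n: "n > 0" and x: "x > 0"
  shows "x * besselY1 (n*x) = (-2/(pi*n)) * Psi (-(n^2/4) * x^2)"
proof -
  have s: "-((n*x/2)^2) = -(n^2/4) * x^2" by (simp add: power_mult_distrib power_divide)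
  have s2: "-((n*x)^2)/4 = -(n^2/4) * x^2" by (simp add: power_mult_distrib)
  have l: "ln \<bar>-(n^2/4) * x^2\<bar> = 2 * ln (n*x/2)"
  proof -
    have "\<bar>-(n^2/4) * x^2\<bar> = (n*x/2)^2" by (simp add: power_mult_distrib power_divide)
    then show ?thesis by (simp add: ln_realpow)
  qed
  show ?thesis unfolding besselY1_eq besselJ1_eq Psi_def s s2 l Gf_def Hf_def using n x
    by (simp add: field_simps power2_eq_square)
qed

lemma pack:
  fixes f f1 f2 u :: "real \<Rightarrow> real"
  assumes d1': "\<forall>s. s \<noteq> 0 \<longrightarrow> (f has_real_derivative f1 s) (at s)"
    and d2': "\<forall>s. s \<noteq> 0 \<longrightarrow> (f1 has_real_derivative f2 s) (at s)"
    and ode': "\<forall>s. s \<noteq> 0 \<longrightarrow> s * f2 s = f s"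
    and c: "c \<noteq> 0" and ueq': "\<forall>x. x > 0 \<longrightarrow> u x = \<alpha> * f (c*x^2)" and x: "x > 0"
  shows "(u has_real_derivative \<alpha> * (f1 (c*x^2) * (2*c*x))) (at x)"
    and "((\<lambda>x. \<alpha> * (f1 (c*x^2) * (2*c*x))) has_real_derivative
           \<alpha> * (f2 (c*x^2) * (2*c*x) * (2*c*x) + f1 (c*x^2) * (2*c))) (at x)"
    and "\<alpha> * (f2 (c*x^2) * (2*c*x) * (2*c*x) + f1 (c*x^2) * (2*c))
           = \<alpha> * (f1 (c*x^2) * (2*c*x)) / x + 4*c*u x"
proof -
  have d1: "\<And>s. s \<noteq> 0 \<Longrightarrow> (f has_real_derivative f1 s) (at s)" using d1' by blast
  have d2: "\<And>s. s \<noteq> 0 \<Longrightarrow> (f1 has_real_derivative f2 s) (at s)" using d2' by blast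
  have ode: "\<And>s. s \<noteq> 0 \<Longrightarrow> s * f2 s = f s" using ode' by blast
  have ueq: "\<And>x. x > 0 \<Longrightarrow> u x = \<alpha> * f (c*x^2)" using ueq' by blast
  note sc = scaled[OF d1 d2 ode c x, of \<alpha>]
  show "(u has_real_derivative \<alpha> * (f1 (c*x^2) * (2*c*x))) (at x)"
    by (rule has_field_derivative_transform_within_open[OF sc(1), where S="{0<..}"]) (use x ueq in auto)
  show "((\<lambda>x. \<alpha> * (f1 (c*x^2) * (2*c*x))) has_real_derivative
           \<alpha> * (f2 (c*x^2) * (2*c*x) * (2*c*x) + f1 (c*x^2) * (2*c))) (at x)" by (rule sc(2))
  show "\<alpha> * (f2 (c*x^2) * (2*c*x) * (2*c*x) + f1 (c*x^2) * (2*c))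
           = \<alpha> * (f1 (c*x^2) * (2*c*x)) / x + 4*c*u x" using sc(3) ueq[OF x] by simp
qed

lemma twice_diff_D:
  assumes "twice_diff_pos M" "x > 0"
  shows "(M has_real_derivative deriv M x) (at x)" "(deriv M has_real_derivative deriv (deriv M) x) (at x)"
  using assms unfolding twice_diff_pos_def by (auto simp: DERIV_deriv_iff_real_differentiable)

lemma part2_generic:
  fixes u U1 U2 v V1 V2 M :: "real \<Rightarrow> real" and q :: real
  assumes du1: "\<And>x. x > 0 \<Longrightarrow> (u has_real_derivative U1 x) (at x)"
    and du2: "\<And>x. x > 0 \<Longrightarrow> (U1 has_real_derivative U2 x) (at x)"
    and eu: "\<And>x. x > 0 \<Longrightarrow> U2 x = U1 x / x + q * u x"
    and dv1: "\<And>x. x > 0 \<Longrightarrow> (v has_real_derivative V1 x) (at x)"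
    and dv2: "\<And>x. x > 0 \<Longrightarrow> (V1 has_real_derivative V2 x) (at x)"
    and ev: "\<And>x. x > 0 \<Longrightarrow> V2 x = V1 x / x + q * v x"
    and W: "\<And>x. x > 0 \<Longrightarrow> u x * V1 x - U1 x * v x \<noteq> 0"
    and M: "twice_diff_pos M" and Mnz: "\<forall>x>0. M x \<noteq> 0"
  shows "(\<forall>x>0. deriv (deriv M) x / M x - (1/x) * (deriv M x / M x) = q)
     \<longleftrightarrow> (\<exists>c1 c2. \<forall>x>0. M x = c1 * u x + c2 * v x)"
proof
  assume h: "\<forall>x>0. deriv (deriv M) x / M x - (1/x) * (deriv M x / M x) = q"
  have eM: "deriv (deriv M) x = deriv M x / x + q * M x" if x: "x > 0" for x
  proof -
    have "deriv (deriv M) x / M x - (1/x) * (deriv M x / M x) = q" using h x by blast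
    then show ?thesis using Mnz x by (simp add: field_simps)
  qed
  show "\<exists>c1 c2. \<forall>x>0. M x = c1 * u x + c2 * v x"
    by (rule wronsk_unique[OF twice_diff_D(1)[OF M] twice_diff_D(2)[OF M] eM du1 du2 eu dv1 dv2 ev W])
next
  assume "\<exists>c1 c2. \<forall>x>0. M x = c1 * u x + c2 * v x"
  then obtain c1 c2 where rep: "\<And>x. x > 0 \<Longrightarrow> M x = c1 * u x + c2 * v x" by blast
  have d1: "(M has_real_derivative c1 * U1 x + c2 * V1 x) (at x)" if x: "x > 0" for x
    by (rule has_field_derivative_transform_within_open[OF DERIV_add[OF DERIV_cmult[OF du1[OF x]] DERIV_cmult[OF dv1[OF x]]], where S="{0<..}"])
       (use x rep in auto)
  have D1: "deriv M x = c1 * U1 x + c2 * V1 x" if x: "x > 0" for x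
    using DERIV_imp_deriv[OF d1[OF x]] .
  have d2: "(deriv M has_real_derivative c1 * U2 x + c2 * V2 x) (at x)" if x: "x > 0" for x
    by (rule has_field_derivative_transform_within_open[OF DERIV_add[OF DERIV_cmult[OF du2[OF x]] DERIV_cmult[OF dv2[OF x]]], where S="{0<..}"])
       (use x D1 in auto)
  show "\<forall>x>0. deriv (deriv M) x / M x - (1/x) * (deriv M x / M x) = q"
  proof (intro allI impI)
    fix x :: real assume x: "x > 0"
    have "deriv (deriv M) x = c1 * U2 x + c2 * V2 x" using DERIV_imp_deriv[OF d2[OF x]] .
    also have "\<dots> = deriv M x / x + q * M x"
      unfolding eu[OF x] ev[OF x] D1[OF x] rep[OF x] using x by (simp add: field_simps)
    finally show "deriv (deriv M) x / M x - (1/x) * (deriv M x / M x) = q"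
      using Mnz x by (simp add: field_simps)
  qed
qed

lemma W_pair:
  assumes a: "\<alpha> \<noteq> 0" and b: "\<beta> \<noteq> 0" and c: "c \<noteq> 0" and x: "x > 0"
  shows "(\<alpha> * Phi (c*x^2)) * (\<beta> * (Psi1 (c*x^2) * (2*c*x))) - (\<alpha> * (Phi1 (c*x^2) * (2*c*x))) * (\<beta> * Psi (c*x^2)) \<noteq> 0"
proof -
  have "(\<alpha> * Phi (c*x^2)) * (\<beta> * (Psi1 (c*x^2) * (2*c*x))) - (\<alpha> * (Phi1 (c*x^2) * (2*c*x))) * (\<beta> * Psi (c*x^2))
      = \<alpha> * \<beta> * (2*c*x) * (Phi (c*x^2) * Psi1 (c*x^2) - Phi1 (c*x^2) * Psi (c*x^2))"
    by (simp add: algebra_simps)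
  also have "\<dots> = \<alpha> * \<beta> * (2*c*x) * Wp (c*x^2)" by (simp add: Wp_eq)
  also have "\<dots> = - (2 * \<alpha> * \<beta> * c * x)" by (simp add: Wp_const)
  finally show ?thesis using a b c x by simp
qed

lemma Phi_facts:
  "\<forall>s. s \<noteq> 0 \<longrightarrow> (Phi has_real_derivative Phi1 s) (at s)"
  "\<forall>s. s \<noteq> 0 \<longrightarrow> (Phi1 has_real_derivative Phi2 s) (at s)"
  "\<forall>s. s \<noteq> 0 \<longrightarrow> s * Phi2 s = Phi s"
  using Phi_d1 Phi_d2 Phi_ode by auto

lemma Psi_facts:
  "\<forall>s. s \<noteq> 0 \<longrightarrow> (Psi has_real_derivative Psi1 s) (at s)"
  "\<forall>s. s \<noteq> 0 \<longrightarrow> (Psi1 has_real_derivative Psi2 s) (at s)"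
  "\<forall>s. s \<noteq> 0 \<longrightarrow> s * Psi2 s = Psi s"
  using Psi_d1 Psi_d2 Psi_ode by auto

lemma pair_part2:
  fixes u v M :: "real \<Rightarrow> real"
  assumes a: "\<alpha> \<noteq> 0" and b: "\<beta> \<noteq> 0" and c: "c \<noteq> 0"
    and ueq: "\<And>x. x > 0 \<Longrightarrow> u x = \<alpha> * Phi (c*x^2)"
    and veq: "\<And>x. x > 0 \<Longrightarrow> v x = \<beta> * Psi (c*x^2)"
    and M: "twice_diff_pos M" and Mnz: "\<forall>x>0. M x \<noteq> 0"
  shows "(\<forall>x>0. deriv (deriv M) x / M x - (1/x) * (deriv M x / M x) = 4*c)
     \<longleftrightarrow> (\<exists>c1 c2. \<forall>x>0. M x = c1 * u x + c2 * v x)"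
proof (rule part2_generic[OF _ _ _ _ _ _ _ M Mnz])
  have ueq': "\<forall>x. x > 0 \<longrightarrow> u x = \<alpha> * Phi (c*x^2)" using ueq by blast
  have veq': "\<forall>x. x > 0 \<longrightarrow> v x = \<beta> * Psi (c*x^2)" using veq by blast
  note pu = pack[OF Phi_facts c ueq']
  note pv = pack[OF Psi_facts c veq']
  show "(u has_real_derivative \<alpha> * (Phi1 (c*x^2) * (2*c*x))) (at x)" if "x > 0" for x using pu(1)[OF that] .
  show "((\<lambda>x. \<alpha> * (Phi1 (c*x^2) * (2*c*x))) has_real_derivative \<alpha> * (Phi2 (c*x^2) * (2*c*x) * (2*c*x) + Phi1 (c*x^2) * (2*c))) (at x)"
    if "x > 0" for x using pu(2)[OF that] .
  show "\<alpha> * (Phi2 (c*x^2) * (2*c*x) * (2*c*x) + Phi1 (c*x^2) * (2*c)) = \<alpha> * (Phi1 (c*x^2) * (2*c*x)) / x + 4*c * u x"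
    if "x > 0" for x using pu(3)[OF that] .
  show "(v has_real_derivative \<beta> * (Psi1 (c*x^2) * (2*c*x))) (at x)" if "x > 0" for x using pv(1)[OF that] .
  show "((\<lambda>x. \<beta> * (Psi1 (c*x^2) * (2*c*x))) has_real_derivative \<beta> * (Psi2 (c*x^2) * (2*c*x) * (2*c*x) + Psi1 (c*x^2) * (2*c))) (at x)"
    if "x > 0" for x using pv(2)[OF that] .
  show "\<beta> * (Psi2 (c*x^2) * (2*c*x) * (2*c*x) + Psi1 (c*x^2) * (2*c)) = \<beta> * (Psi1 (c*x^2) * (2*c*x)) / x + 4*c * v x"
    if "x > 0" for x using pv(3)[OF that] .
  show "u x * (\<beta> * (Psi1 (c*x^2) * (2*c*x))) - \<alpha> * (Phi1 (c*x^2) * (2*c*x)) * v x \<noteq> 0"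
    if "x > 0" for x using W_pair[OF a b c that] ueq[OF that] veq[OF that] by simp
qed

definition "D1 \<alpha> c f1 x = \<alpha> * (f1 (c*x^2) * (2*c*x))"
definition "D2 \<alpha> c f1 f2 x = \<alpha> * (f2 (c*x^2) * (2*c*x) * (2*c*x) + f1 (c*x^2) * (2*c))"

lemma pack2:
  fixes f f1 f2 u :: "real \<Rightarrow> real"
  assumes "\<forall>s. s \<noteq> 0 \<longrightarrow> (f has_real_derivative f1 s) (at s)"
    and "\<forall>s. s \<noteq> 0 \<longrightarrow> (f1 has_real_derivative f2 s) (at s)"
    and "\<forall>s. s \<noteq> 0 \<longrightarrow> s * f2 s = f s"
    and "c \<noteq> 0" and "\<forall>x. x > 0 \<longrightarrow> u x = \<alpha> * f (c*x^2)"
  shows "\<And>x. x > 0 \<Longrightarrow> (u has_real_derivative D1 \<alpha> c f1 x) (at x)"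
    and "\<And>x. x > 0 \<Longrightarrow> (D1 \<alpha> c f1 has_real_derivative D2 \<alpha> c f1 f2 x) (at x)"
    and "\<And>x. x > 0 \<Longrightarrow> D2 \<alpha> c f1 f2 x = D1 \<alpha> c f1 x / x + 4*c*u x"
  using pack[OF assms] unfolding D1_def[abs_def] D2_def by auto

lemma part3_generic:
  fixes u U1 U2 v V1 V2 w W1 W2 z Z1 Z2 :: "real \<Rightarrow> real"
  assumes du1: "\<And>x. x > 0 \<Longrightarrow> (u has_real_derivative U1 x) (at x)"
    and du2: "\<And>x. x > 0 \<Longrightarrow> (U1 has_real_derivative U2 x) (at x)"
    and eu: "\<And>x. x > 0 \<Longrightarrow> U2 x = U1 x / x + q * u x"
    and dv1: "\<And>x. x > 0 \<Longrightarrow> (v has_real_derivative V1 x) (at x)"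
    and dv2: "\<And>x. x > 0 \<Longrightarrow> (V1 has_real_derivative V2 x) (at x)"
    and ev: "\<And>x. x > 0 \<Longrightarrow> V2 x = V1 x / x + q * v x"
    and dw1: "\<And>x. x > 0 \<Longrightarrow> (w has_real_derivative W1 x) (at x)"
    and dw2: "\<And>x. x > 0 \<Longrightarrow> (W1 has_real_derivative W2 x) (at x)"
    and ew: "\<And>x. x > 0 \<Longrightarrow> W2 x = W1 x / x - q * w x"
    and dz1: "\<And>x. x > 0 \<Longrightarrow> (z has_real_derivative Z1 x) (at x)"
    and dz2: "\<And>x. x > 0 \<Longrightarrow> (Z1 has_real_derivative Z2 x) (at x)"
    and ez: "\<And>x. x > 0 \<Longrightarrow> Z2 x = Z1 x / x - q * z x"
    and mu: "\<mu> > 0" and nu: "\<nu> > 0"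
  shows "stokesE2_cardioid (\<lambda>m v'. (a * u m + b * v m) * (c * w v' + d * z v') / (1 * (m^2 + v'^2))) \<mu> \<nu> = 0"
proof -
  have dM1: "((\<lambda>x. a * u x + b * v x) has_real_derivative a * U1 x + b * V1 x) (at x)" if "x > 0" for x
    using DERIV_add[OF DERIV_cmult[OF du1[OF that]] DERIV_cmult[OF dv1[OF that]]] .
  have dM2: "((\<lambda>x. a * U1 x + b * V1 x) has_real_derivative a * U2 x + b * V2 x) (at x)" if "x > 0" for x
    using DERIV_add[OF DERIV_cmult[OF du2[OF that]] DERIV_cmult[OF dv2[OF that]]] .
  have dN1: "((\<lambda>x. c * w x + d * z x) has_real_derivative c * W1 x + d * Z1 x) (at x)" if "x > 0" for x
    using DERIV_add[OF DERIV_cmult[OF dw1[OF that]] DERIV_cmult[OF dz1[OF that]]] .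
  have dN2: "((\<lambda>x. c * W1 x + d * Z1 x) has_real_derivative c * W2 x + d * Z2 x) (at x)" if "x > 0" for x
    using DERIV_add[OF DERIV_cmult[OF dw2[OF that]] DERIV_cmult[OF dz2[OF that]]] .
  have "stokesE2_cardioid (\<lambda>m v'. (\<lambda>x. a * u x + b * v x) m * (\<lambda>x. c * w x + d * z x) v' / (1 * (m^2 + v'^2))) \<mu> \<nu>
     = (\<mu>^2 + \<nu>^2)^2 / 1 * ((\<lambda>x. c * w x + d * z x) \<nu> * ((\<lambda>x. a * U2 x + b * V2 x) \<mu> - (\<lambda>x. a * U1 x + b * V1 x) \<mu> / \<mu>)
        + (\<lambda>x. a * u x + b * v x) \<mu> * ((\<lambda>x. c * W2 x + d * Z2 x) \<nu> - (\<lambda>x. c * W1 x + d * Z1 x) \<nu> / \<nu>))"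
    by (rule E2_sep[OF dM1 dM2 dN1 dN2 _ mu nu]) simp_all
  also have "\<dots> = 0"
  proof -
    have m: "(a * U2 \<mu> + b * V2 \<mu>) - (a * U1 \<mu> + b * V1 \<mu>) / \<mu> = q * (a * u \<mu> + b * v \<mu>)"
      unfolding eu[OF mu] ev[OF mu] using mu by (simp add: field_simps)
    have n: "(c * W2 \<nu> + d * Z2 \<nu>) - (c * W1 \<nu> + d * Z1 \<nu>) / \<nu> = - q * (c * w \<nu> + d * z \<nu>)"
      unfolding ew[OF nu] ez[OF nu] using nu by (simp add: field_simps)
    show ?thesis unfolding m n by (simp add: algebra_simps)
  qed
  finally show ?thesis by simp
qed


theorem mainTheorem3:
  shows
   "(\<forall>M N :: real \<Rightarrow> real.
       twice_diff_pos M \<and> twice_diff_pos N \<and>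
       (\<forall>\<mu>>0. M \<mu> \<noteq> 0) \<and> (\<forall>\<nu>>0. N \<nu> \<noteq> 0) \<longrightarrow>
       ((\<forall>\<mu>>0. \<forall>\<nu>>0. stokesE2_cardioid
            (\<lambda>m v. M m * N v / (sqrt 2 * (m^2 + v^2))) \<mu> \<nu> = 0)
        \<longleftrightarrow>
        (\<exists>lam::real.
           (\<forall>\<mu>>0. deriv (deriv M) \<mu> / M \<mu> - (1/\<mu>) * (deriv M \<mu> / M \<mu>) = lam) \<and>
           (\<forall>\<nu>>0. - deriv (deriv N) \<nu> / N \<nu> + (1/\<nu>) * (deriv N \<nu> / N \<nu>) = lam))))
    \<and>
    (\<forall>n::real. n > 0 \<longrightarrow>
       (\<forall>M :: real \<Rightarrow> real. twice_diff_pos M \<and> (\<forall>\<mu>>0. M \<mu> \<noteq> 0) \<longrightarrow>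
          ((\<forall>\<mu>>0. deriv (deriv M) \<mu> / M \<mu> - (1/\<mu>) * (deriv M \<mu> / M \<mu>) = n^2)
           \<longleftrightarrow> (\<exists>c1 c2. \<forall>\<mu>>0. M \<mu> = c1 * \<mu> * besselI1 (n*\<mu>) + c2 * \<mu> * besselK1 (n*\<mu>))))
     \<and>
       (\<forall>N :: real \<Rightarrow> real. twice_diff_pos N \<and> (\<forall>\<nu>>0. N \<nu> \<noteq> 0) \<longrightarrow>
          ((\<forall>\<nu>>0. - deriv (deriv N) \<nu> / N \<nu> + (1/\<nu>) * (deriv N \<nu> / N \<nu>) = n^2)
           \<longleftrightarrow> (\<exists>c3 c4. \<forall>\<nu>>0. N \<nu> = c3 * \<nu> * besselJ1 (n*\<nu>) + c4 * \<nu> * besselY1 (n*\<nu>)))))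
    \<and>
    (\<forall>(n::real) c1 c2 c3 c4. n > 0 \<longrightarrow>
       (\<forall>\<mu>>0. \<forall>\<nu>>0. stokesE2_cardioid
          (\<lambda>m v. (c1 * m * besselI1 (n * m) + c2 * m * besselK1 (n * m))
                 * (c3 * v * besselJ1 (n * v) + c4 * v * besselY1 (n * v)) / (m^2 + v^2)) \<mu> \<nu> = 0))"
proof (intro conjI)
  show "\<forall>M N :: real \<Rightarrow> real.
       twice_diff_pos M \<and> twice_diff_pos N \<and>
       (\<forall>\<mu>>0. M \<mu> \<noteq> 0) \<and> (\<forall>\<nu>>0. N \<nu> \<noteq> 0) \<longrightarrow>
       ((\<forall>\<mu>>0. \<forall>\<nu>>0. stokesE2_cardioid
            (\<lambda>m v. M m * N v / (sqrt 2 * (m^2 + v^2))) \<mu> \<nu> = 0)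
        \<longleftrightarrow>
        (\<exists>lam::real.
           (\<forall>\<mu>>0. deriv (deriv M) \<mu> / M \<mu> - (1/\<mu>) * (deriv M \<mu> / M \<mu>) = lam) \<and>
           (\<forall>\<nu>>0. - deriv (deriv N) \<nu> / N \<nu> + (1/\<nu>) * (deriv N \<nu> / N \<nu>) = lam)))"
  proof (intro allI impI)
    fix M N :: "real \<Rightarrow> real"
    assume H: "twice_diff_pos M \<and> twice_diff_pos N \<and> (\<forall>\<mu>>0. M \<mu> \<noteq> 0) \<and> (\<forall>\<nu>>0. N \<nu> \<noteq> 0)"
    then have M: "twice_diff_pos M" and N: "twice_diff_pos N"
      and Mnz: "\<forall>\<mu>>0. M \<mu> \<noteq> 0" and Nnz: "\<forall>\<nu>>0. N \<nu> \<noteq> 0" by auto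
    define FM where "FM \<mu> = deriv (deriv M) \<mu> / M \<mu> - (1/\<mu>) * (deriv M \<mu> / M \<mu>)" for \<mu>
    define FN where "FN \<nu> = - deriv (deriv N) \<nu> / N \<nu> + (1/\<nu>) * (deriv N \<nu> / N \<nu>)" for \<nu>
    have key: "stokesE2_cardioid (\<lambda>m v. M m * N v / (sqrt 2 * (m^2 + v^2))) \<mu> \<nu> = 0 \<longleftrightarrow> FM \<mu> = FN \<nu>"
      if mu: "\<mu> > 0" and nu: "\<nu> > 0" for \<mu> \<nu>
    proof -
      have k: "sqrt 2 \<noteq> (0::real)" by simp
      have e: "stokesE2_cardioid (\<lambda>m v. M m * N v / (sqrt 2 * (m^2 + v^2))) \<mu> \<nu>
         = (\<mu>^2 + \<nu>^2)^2 / sqrt 2 * (N \<nu> * (deriv (deriv M) \<mu> - deriv M \<mu> / \<mu>)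
             + M \<mu> * (deriv (deriv N) \<nu> - deriv N \<nu> / \<nu>))"
        by (rule E2_sep[OF twice_diff_D(1)[OF M] twice_diff_D(2)[OF M] twice_diff_D(1)[OF N] twice_diff_D(2)[OF N] k mu nu])
      have mz: "M \<mu> \<noteq> 0" using Mnz mu by blast
      have nz: "N \<nu> \<noteq> 0" using Nnz nu by blast
      have f: "N \<nu> * (deriv (deriv M) \<mu> - deriv M \<mu> / \<mu>) + M \<mu> * (deriv (deriv N) \<nu> - deriv N \<nu> / \<nu>)
          = M \<mu> * N \<nu> * (FM \<mu> - FN \<nu>)"
        unfolding FM_def FN_def using mz nz mu nu by (simp add: field_simps)
      have R: "(\<mu>^2 + \<nu>^2)^2 / sqrt 2 \<noteq> 0" using mu by (simp add: add_pos_nonneg)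
      show ?thesis unfolding e f using R mz nz mu by simp
    qed
    have "(\<forall>\<mu>>0. \<forall>\<nu>>0. stokesE2_cardioid (\<lambda>m v. M m * N v / (sqrt 2 * (m^2 + v^2))) \<mu> \<nu> = 0)
       \<longleftrightarrow> (\<exists>lam. (\<forall>\<mu>>0. FM \<mu> = lam) \<and> (\<forall>\<nu>>0. FN \<nu> = lam))"
    proof
      assume h: "\<forall>\<mu>>0. \<forall>\<nu>>0. stokesE2_cardioid (\<lambda>m v. M m * N v / (sqrt 2 * (m^2 + v^2))) \<mu> \<nu> = 0"
      then have e: "FM \<mu> = FN \<nu>" if "\<mu> > 0" "\<nu> > 0" for \<mu> \<nu> using key that by blast
      show "\<exists>lam. (\<forall>\<mu>>0. FM \<mu> = lam) \<and> (\<forall>\<nu>>0. FN \<nu> = lam)"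
      proof (intro exI[of _ "FM 1"] conjI allI impI)
        fix \<mu> :: real assume "\<mu> > 0"
        then show "FM \<mu> = FM 1" using e[of \<mu> 1] e[of 1 1] by simp
      next
        fix \<nu> :: real assume "\<nu> > 0"
        then show "FN \<nu> = FM 1" using e[of 1 \<nu>] by simp
      qed
    next
      assume "\<exists>lam. (\<forall>\<mu>>0. FM \<mu> = lam) \<and> (\<forall>\<nu>>0. FN \<nu> = lam)"
      then show "\<forall>\<mu>>0. \<forall>\<nu>>0. stokesE2_cardioid (\<lambda>m v. M m * N v / (sqrt 2 * (m^2 + v^2))) \<mu> \<nu> = 0"
        using key by auto
    qed
    then show "(\<forall>\<mu>>0. \<forall>\<nu>>0. stokesE2_cardioid (\<lambda>m v. M m * N v / (sqrt 2 * (m^2 + v^2))) \<mu> \<nu> = 0)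
       \<longleftrightarrow> (\<exists>lam. (\<forall>\<mu>>0. deriv (deriv M) \<mu> / M \<mu> - (1/\<mu>) * (deriv M \<mu> / M \<mu>) = lam) \<and>
           (\<forall>\<nu>>0. - deriv (deriv N) \<nu> / N \<nu> + (1/\<nu>) * (deriv N \<nu> / N \<nu>) = lam))"
      unfolding FM_def FN_def .
  qed
next
  show "\<forall>n::real. n > 0 \<longrightarrow>
       (\<forall>M :: real \<Rightarrow> real. twice_diff_pos M \<and> (\<forall>\<mu>>0. M \<mu> \<noteq> 0) \<longrightarrow>
          ((\<forall>\<mu>>0. deriv (deriv M) \<mu> / M \<mu> - (1/\<mu>) * (deriv M \<mu> / M \<mu>) = n^2)
           \<longleftrightarrow> (\<exists>c1 c2. \<forall>\<mu>>0. M \<mu> = c1 * \<mu> * besselI1 (n*\<mu>) + c2 * \<mu> * besselK1 (n*\<mu>))))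
     \<and>
       (\<forall>N :: real \<Rightarrow> real. twice_diff_pos N \<and> (\<forall>\<nu>>0. N \<nu> \<noteq> 0) \<longrightarrow>
          ((\<forall>\<nu>>0. - deriv (deriv N) \<nu> / N \<nu> + (1/\<nu>) * (deriv N \<nu> / N \<nu>) = n^2)
           \<longleftrightarrow> (\<exists>c3 c4. \<forall>\<nu>>0. N \<nu> = c3 * \<nu> * besselJ1 (n*\<nu>) + c4 * \<nu> * besselY1 (n*\<nu>))))"
  proof (intro allI impI conjI)
    fix n :: real assume n: "n > 0"
    fix M :: "real \<Rightarrow> real" assume HM: "twice_diff_pos M \<and> (\<forall>\<mu>>0. M \<mu> \<noteq> 0)"
    have c: "n^2/4 \<noteq> (0::real)" using n by simp
    have a: "2/n \<noteq> (0::real)" "1/n \<noteq> (0::real)" using n by auto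
    have P: "(\<forall>x>0. deriv (deriv M) x / M x - (1/x) * (deriv M x / M x) = 4*(n^2/4))
      \<longleftrightarrow> (\<exists>c1 c2. \<forall>x>0. M x = c1 * (\<lambda>x. x * besselI1 (n*x)) x + c2 * (\<lambda>x. x * besselK1 (n*x)) x)"
      by (rule pair_part2[OF a c _ _ conjunct1[OF HM] conjunct2[OF HM]])
         (use uI_eq[OF n] uK_eq[OF n] in auto)
    show "(\<forall>\<mu>>0. deriv (deriv M) \<mu> / M \<mu> - (1/\<mu>) * (deriv M \<mu> / M \<mu>) = n^2)
           \<longleftrightarrow> (\<exists>c1 c2. \<forall>\<mu>>0. M \<mu> = c1 * \<mu> * besselI1 (n*\<mu>) + c2 * \<mu> * besselK1 (n*\<mu>))"
      using P by (simp add: mult.assoc)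
  next
    fix n :: real assume n: "n > 0"
    fix N :: "real \<Rightarrow> real" assume HN: "twice_diff_pos N \<and> (\<forall>\<nu>>0. N \<nu> \<noteq> 0)"
    have c: "-(n^2/4) \<noteq> (0::real)" using n by simp
    have a: "-2/n \<noteq> (0::real)" "-2/(pi*n) \<noteq> (0::real)" using n by auto
    have P: "(\<forall>x>0. deriv (deriv N) x / N x - (1/x) * (deriv N x / N x) = 4*(-(n^2/4)))
      \<longleftrightarrow> (\<exists>c1 c2. \<forall>x>0. N x = c1 * (\<lambda>x. x * besselJ1 (n*x)) x + c2 * (\<lambda>x. x * besselY1 (n*x)) x)"
      by (rule pair_part2[OF a c _ _ conjunct1[OF HN] conjunct2[OF HN]])
         (use uJ_eq[OF n] uY_eq[OF n] in auto)
    have E: "(- deriv (deriv N) x / N x + (1/x) * (deriv N x / N x) = n^2)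
        \<longleftrightarrow> (deriv (deriv N) x / N x - (1/x) * (deriv N x / N x) = 4*(-(n^2/4)))" for x
      by (auto simp: algebra_simps)
    show "(\<forall>\<nu>>0. - deriv (deriv N) \<nu> / N \<nu> + (1/\<nu>) * (deriv N \<nu> / N \<nu>) = n^2)
           \<longleftrightarrow> (\<exists>c3 c4. \<forall>\<nu>>0. N \<nu> = c3 * \<nu> * besselJ1 (n*\<nu>) + c4 * \<nu> * besselY1 (n*\<nu>))"
      unfolding E using P by (simp add: mult.assoc)
  qed
next
  show "\<forall>(n::real) c1 c2 c3 c4. n > 0 \<longrightarrow>
       (\<forall>\<mu>>0. \<forall>\<nu>>0. stokesE2_cardioid
          (\<lambda>m v. (c1 * m * besselI1 (n * m) + c2 * m * besselK1 (n * m))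
                 * (c3 * v * besselJ1 (n * v) + c4 * v * besselY1 (n * v)) / (m^2 + v^2)) \<mu> \<nu> = 0)"
  proof (intro allI impI)
    fix n c1 c2 c3 c4 \<mu> \<nu> :: real
    assume n: "n > 0" and mu: "\<mu> > 0" and nu: "\<nu> > 0"
    have cI: "n^2/4 \<noteq> (0::real)" and cJ: "-(n^2/4) \<noteq> (0::real)" using n by auto
    have eI: "\<forall>x. x > 0 \<longrightarrow> x * besselI1 (n*x) = (2/n) * Phi (n^2/4 * x^2)" using uI_eq[OF n] by blast
    have eK: "\<forall>x. x > 0 \<longrightarrow> x * besselK1 (n*x) = (1/n) * Psi (n^2/4 * x^2)" using uK_eq[OF n] by blast
    have eJ: "\<forall>x. x > 0 \<longrightarrow> x * besselJ1 (n*x) = (-2/n) * Phi (-(n^2/4) * x^2)" using uJ_eq[OF n] by blast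
    have eY: "\<forall>x. x > 0 \<longrightarrow> x * besselY1 (n*x) = (-2/(pi*n)) * Psi (-(n^2/4) * x^2)" using uY_eq[OF n] by blast
    note pI = pack2[OF Phi_facts cI eI]
    note pK = pack2[OF Psi_facts cI eK]
    note pJ = pack2[OF Phi_facts cJ eJ]
    note pY = pack2[OF Psi_facts cJ eY]
    have q1: "4 * (n^2/4) = n^2" by simp
    have q2: "4 * (-(n^2/4)) = - (n^2)" by simp
    have "stokesE2_cardioid (\<lambda>m v'. (c1 * (\<lambda>x. x * besselI1 (n*x)) m + c2 * (\<lambda>x. x * besselK1 (n*x)) m)
        * (c3 * (\<lambda>x. x * besselJ1 (n*x)) v' + c4 * (\<lambda>x. x * besselY1 (n*x)) v') / (1 * (m^2 + v'^2))) \<mu> \<nu> = 0"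
      by (rule part3_generic[where q="n^2", OF pI(1) pI(2) _ pK(1) pK(2) _ pJ(1) pJ(2) _ pY(1) pY(2) _ mu nu])
         (use pI(3) pK(3) pJ(3) pY(3) in \<open>simp_all add: q1 q2\<close>)
    then show "stokesE2_cardioid
          (\<lambda>m v. (c1 * m * besselI1 (n * m) + c2 * m * besselK1 (n * m))
                 * (c3 * v * besselJ1 (n * v) + c4 * v * besselY1 (n * v)) / (m^2 + v^2)) \<mu> \<nu> = 0"
      by (simp add: mult.assoc)
  qed
qed

end
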